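(* Let $X$ be a non-empty set and let $R$ be a binary relation on $X$. The following are equivalent: (a) There exists a non-empty $w$-stable set of $(X,R)$. (b) There exists a compact topology $\tau$ on $X$ with respect to which $R$ is generalized upper tc-semicontinuous.
   Context: For a binary relation $R$ on $X$, write $xRy$ for $(x,y)\in R$. The transitive closure $\overline{R}$ of $R$ is defined by: $x\overline{R}y$ iff there exist $K\in\mathbb{N}$, $K\ge 1$, and $x_0,\dots,x_K\in X$ with $x_0=x$, $x_K=y$, and $x_{k-1}Rx_k$ for all $k\in\{1,\dots,K\}$. The asymmetric part of a relation $Q$ is $P(Q)$, defined by $xP(Q)y$ iff $xQy$ and not $yQx$. A set $F\subseteq X$ is a $w$-stable set of $(X,R)$ if (i) (internal stability) for all distinct $x,y\in F$, $(x,y)\notin\overline{R}$; and (ii) (external stability) for all $x\in F$ and $y\in X\setminus F$, if $y\overline{R}x$ then $x\overline{R}y$. The relation $R$ is generalized upper tc-semicontinuous with respect to a topology $\tau$ on $X$ if for every $x\in X$ the set $\{y\in X : xP(\overline{R})y\}$ is open in $\tau$. A topology is compact if every open cover of $X$ has a finite subcover. *)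

theory Defs
  imports "HOL-Analysis.Analysis"
begin

definition asym_part :: "('a \<times> 'a) set \<Rightarrow> ('a \<times> 'a) set" where
  "asym_part Q = {(x, y). (x, y) \<in> Q \<and> (y, x) \<notin> Q}"

definition w_stable :: "'a set \<Rightarrow> ('a \<times> 'a) set \<Rightarrow> 'a set \<Rightarrow> bool" where
  "w_stable X R F \<longleftrightarrow> F \<subseteq> X
     \<and> (\<forall>x\<in>F. \<forall>y\<in>F. x \<noteq> y \<longrightarrow> (x, y) \<notin> R\<^sup>+)
     \<and> (\<forall>x\<in>F. \<forall>y\<in>X - F. (y, x) \<in> R\<^sup>+ \<longrightarrow> (x, y) \<in> R\<^sup>+)"

definition gen_upper_tc_semicont :: "'a set \<Rightarrow> ('a \<times> 'a) set \<Rightarrow> 'a topology \<Rightarrow> bool" where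
  "gen_upper_tc_semicont X R T \<longleftrightarrow>
     (\<forall>x\<in>X. openin T {y \<in> X. (x, y) \<in> asym_part (R\<^sup>+)})"

end

theory Submission
  imports Defs
begin

lemma asym_trans:
  assumes "(a,b) \<in> asym_part (R\<^sup>+)" "(b,c) \<in> asym_part (R\<^sup>+)"
  shows "(a,c) \<in> asym_part (R\<^sup>+)"
  using assms unfolding asym_part_def
  by (auto intro: trancl_trans)

lemma asym_trancl:
  assumes "r \<subseteq> asym_part (R\<^sup>+)"
  shows "r\<^sup>+ \<subseteq> asym_part (R\<^sup>+)"
proof (rule subrelI)
  fix a b assume "(a,b) \<in> r\<^sup>+"
  then show "(a,b) \<in> asym_part (R\<^sup>+)"
  proof (induction rule: trancl_induct)
    case (base y) then show ?case using assms by blast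
  next
    case (step y z) then show ?case using assms asym_trans[of a y R z] by blast
  qed
qed

theorem theorem1:
  fixes X :: "'a set" and R :: "('a \<times> 'a) set"
  assumes "X \<noteq> {}" and "R \<subseteq> X \<times> X"
  shows "(\<exists>F. F \<noteq> {} \<and> w_stable X R F) \<longleftrightarrow>
         (\<exists>T. topspace T = X \<and> compact_space T \<and> gen_upper_tc_semicont X R T)"
proof
  assume "\<exists>F. F \<noteq> {} \<and> w_stable X R F"
  then obtain F x0 where F: "w_stable X R F" and x0: "x0 \<in> F" by blast
  have x0X: "x0 \<in> X" using F x0 unfolding w_stable_def by blast
  define L where "L = (\<lambda>U. U = X \<or> (U \<subseteq> X \<and> x0 \<notin> U))"
  have ist: "istopology L"
    unfolding istopology_def L_def using x0X by auto
  define T where "T = topology L"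
  have op: "openin T = L" unfolding T_def using ist by simp
  have ts: "topspace T = X"
    unfolding topspace_def op L_def by auto
  have cs: "compact_space T"
    unfolding compact_space_def compactin_def ts op
  proof (intro conjI allI impI)
    fix U assume U: "(\<forall>u\<in>U. L u) \<and> X \<subseteq> \<Union>U"
    then obtain u where "u \<in> U" "x0 \<in> u" using x0X by blast
    then have "u = X" using U L_def by blast
    then show "\<exists>F. finite F \<and> F \<subseteq> U \<and> X \<subseteq> \<Union>F" using \<open>u \<in> U\<close>
      by (intro exI[of _ "{u}"]) auto
  qed simp
  have "gen_upper_tc_semicont X R T"
    unfolding gen_upper_tc_semicont_def op L_def
  proof (intro ballI disjI2 conjI)
    fix x assume "x \<in> X"
    show "{y \<in> X. (x, y) \<in> asym_part (R\<^sup>+)} \<subseteq> X" by blast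
    show "x0 \<notin> {y \<in> X. (x, y) \<in> asym_part (R\<^sup>+)}"
    proof
      assume "x0 \<in> {y \<in> X. (x, y) \<in> asym_part (R\<^sup>+)}"
      then have h: "(x,x0) \<in> R\<^sup>+" "(x0,x) \<notin> R\<^sup>+" unfolding asym_part_def by auto
      show False
      proof (cases "x \<in> F")
        case True
        have "x = x0 \<or> (x, x0) \<notin> R\<^sup>+"
          using F x0 True unfolding w_stable_def by (metis (no_types, lifting))
        then show ?thesis using h by blast
      next
        case False
        have ext: "\<forall>x\<in>F. \<forall>y\<in>X - F. (y, x) \<in> R\<^sup>+ \<longrightarrow> (x, y) \<in> R\<^sup>+"
          using F unfolding w_stable_def by (metis (no_types, lifting))
        have "x \<in> X - F" using False \<open>x \<in> X\<close> by blast
        then show ?thesis using ext x0 h by blast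
      qed
    qed
  qed
  then show "\<exists>T. topspace T = X \<and> compact_space T \<and> gen_upper_tc_semicont X R T"
    using ts cs by blast
next
  assume "\<exists>T. topspace T = X \<and> compact_space T \<and> gen_upper_tc_semicont X R T"
  then obtain T where ts: "topspace T = X" and cs: "compact_space T"
    and gs: "gen_upper_tc_semicont X R T" by blast
  define P where "P = asym_part (R\<^sup>+)"
  define S where "S = (\<lambda>x. {y \<in> X. (x, y) \<in> P})"
  have Sop: "\<And>x. x \<in> X \<Longrightarrow> openin T (S x)"
    using gs unfolding gen_upper_tc_semicont_def S_def P_def by blast
  have "\<exists>x0\<in>X. \<forall>y\<in>X. (y,x0) \<notin> P"
  proof (rule ccontr)
    assume "\<not> ?thesis"
    then have cov: "\<forall>x\<in>X. \<exists>y\<in>X. (y,x) \<in> P" by blast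
    have "X \<subseteq> \<Union>(S ` X)" using cov unfolding S_def by blast
    then obtain G where G: "finite G" "G \<subseteq> S ` X" "X \<subseteq> \<Union>G"
      using cs Sop unfolding compact_space_def compactin_def ts by (metis imageE)
    then obtain Y where Y: "Y \<subseteq> X" "finite Y" "G = S ` Y"
      by (meson finite_subset_image)
    obtain x1 where "x1 \<in> X" using assms(1) by blast
    then have "Y \<noteq> {}" using G Y by auto
    then obtain y0 where y0: "y0 \<in> Y" by blast
    define Q where "Q = P \<inter> (Y \<times> Y)"
    have fQ: "finite Q" unfolding Q_def using Y by auto
    have "Q\<^sup>+ \<subseteq> P" unfolding P_def by (rule asym_trancl) (auto simp: Q_def P_def)
    then have "acyclic Q" unfolding acyclic_def P_def asym_part_def by blast
    then have "wf Q" using fQ wf_iff_acyclic_if_finite by blast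
    then obtain z where z: "z \<in> Y" "\<forall>y. (y,z) \<in> Q \<longrightarrow> y \<notin> Y"
      using y0 by (metis wf_eq_minimal)
    have "z \<in> \<Union>G" using z Y G by blast
    then obtain y where "y \<in> Y" "z \<in> S y" using Y by auto
    then have "(y,z) \<in> Q" unfolding S_def Q_def using z by auto
    then show False using z \<open>y \<in> Y\<close> by blast
  qed
  then obtain x0 where x0: "x0 \<in> X" "\<forall>y\<in>X. (y,x0) \<notin> P" by blast
  have "w_stable X R {x0}"
    unfolding w_stable_def
  proof (intro conjI ballI impI)
    show "{x0} \<subseteq> X" using x0 by simp
  next
    fix x y assume "x \<in> {x0}" "y \<in> {x0}" "x \<noteq> y"
    then show "(x,y) \<notin> R\<^sup>+" by simp
  next
    fix x y assume "x \<in> {x0}" "y \<in> X - {x0}" "(y,x) \<in> R\<^sup>+"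
    then show "(x,y) \<in> R\<^sup>+" using x0 unfolding P_def asym_part_def by auto
  qed
  then show "\<exists>F. F \<noteq> {} \<and> w_stable X R F" by blast
qed

end
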